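(* Let $V\in\Omega_n$ and suppose $0$ is an eigenvalue of $V$ of algebraic multiplicity $n_0\ge1$. Then there exist a neighborhood $\mathcal U$ of $\sigma(V)$ in $\mathbb G_n$ and a holomorphic map $\sigma^0=(\sigma^0_1,\dots,\sigma^0_{n_0}):\sigma^{-1}(\mathcal U)\to\mathbb C^{n_0}$ such that for every $M\in\sigma^{-1}(\mathcal U)$, $$X^{n_0}+\sum_{j=1}^{n_0}(-1)^j\sigma^0_j(M)X^{n_0-j}=(X-\lambda_1)\cdots(X-\lambda_{n_0}),$$ where $\lambda_1,\dots,\lambda_{n_0}$ are the $n_0$ eigenvalues of $M$ (counted with multiplicity) of smallest modulus.
   Context: $\mathcal M_n$ is the space of complex $n\times n$ matrices; $\rho$ is the spectral radius; $\Omega_n=\{A:\rho(A)<1\}$. Write $\det(tI-A)=t^n+\sum_{j=1}^n(-1)^j\sigma_j(A)t^{n-j}$, $\sigma=(\sigma_1,\dots,\sigma_n):\mathcal M_n\to\mathbb C^n$, and $\mathbb G_n=\sigma(\Omega_n)$. *)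

theory Defs
  imports "HOL-Analysis.Analysis" "HOL-Computational_Algebra.Polynomial"
begin

definition charpoly :: "complex ^ 'n ^ 'n \<Rightarrow> complex poly" where
  "charpoly A = det (\<chi> i j. (if i = j then [:0, 1:] else 0) - [: A $ i $ j :])"

definition spectral_radius :: "complex ^ 'n ^ 'n \<Rightarrow> real" where
  "spectral_radius A = Max (cmod ` {z. poly (charpoly A) z = 0})"

definition Omega :: "(complex ^ 'n ^ 'n) set" where
  "Omega = {A. spectral_radius A < 1}"

text \<open>sigma A j = sigma_j(A) for 1 \<le> j \<le> n (and 0 otherwise), so that
  det(tI-A) = t^n + sum_j (-1)^j sigma_j(A) t^(n-j).  Points of C^n are
  represented as functions nat \<Rightarrow> complex supported in {1..n}, with the product topology.\<close>
definition sigma :: "complex ^ 'n ^ 'n \<Rightarrow> nat \<Rightarrow> complex" where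
  "sigma A j = (if 1 \<le> j \<and> j \<le> CARD('n)
                then (-1) ^ j * coeff (charpoly A) (CARD('n) - j) else 0)"

definition Gn :: "('n::finite) itself \<Rightarrow> (nat \<Rightarrow> complex) set" where
  "Gn _ = sigma ` (Omega :: (complex ^ 'n ^ 'n) set)"

definition cscale :: "complex \<Rightarrow> complex ^ 'n ^ 'm \<Rightarrow> complex ^ 'n ^ 'm" where
  "cscale c A = (\<chi> i j. c * A $ i $ j)"

text \<open>Holomorphic function of several complex variables (the matrix entries):
  complex-Frechet differentiable at every point of S.\<close>
definition holomorphic_mat_on :: "(complex ^ 'n ^ 'm \<Rightarrow> complex) \<Rightarrow> (complex ^ 'n ^ 'm) set \<Rightarrow> bool" where
  "holomorphic_mat_on f S \<longleftrightarrow>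
     (\<forall>x\<in>S. \<exists>D. (f has_derivative D) (at x) \<and> (\<forall>c v. D (cscale c v) = c * D v))"

end

theory Submission
  imports Defs "HOL-Complex_Analysis.Complex_Analysis"
begin



no_notation fps_nth (infixl "$" 75)

type_synonym 'n mat = "complex ^ 'n ^ 'n"

definition scl :: "complex \<Rightarrow> ('a::real_normed_vector \<Rightarrow>\<^sub>L complex) \<Rightarrow> ('a \<Rightarrow>\<^sub>L complex)" where
  "scl c L = blinfun_compose (blinfun_mult_right c) L"

lemma scl_apply[simp]: "blinfun_apply (scl c L) v = c * L v"
  by (simp add: scl_def)

lemma continuous_on_scl[continuous_intros]:
  assumes "continuous_on S f" "continuous_on S g"
  shows "continuous_on S (\<lambda>x. scl (f x) (g x))"
  unfolding scl_def
  by (intro continuous_intros assms)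

definition Cls :: "(('n::finite) mat \<times> real) set \<Rightarrow> ('n mat \<Rightarrow> real \<Rightarrow> complex) \<Rightarrow> bool" where
  "Cls S f \<longleftrightarrow> (\<exists>fd. continuous_on S (\<lambda>p. fd (fst p) (snd p)) \<and> continuous_on S (\<lambda>p. f (fst p) (snd p)) \<and>
     (\<forall>x t. (x,t)\<in>S \<longrightarrow> ((\<lambda>y. f y t) has_derivative blinfun_apply (fd x t)) (at x) \<and>
        (\<forall>c v. fd x t (cscale c v) = c * fd x t v)))"

lemma Cls_mono: "Cls S f \<Longrightarrow> T \<subseteq> S \<Longrightarrow> Cls T f"
  unfolding Cls_def by (meson continuous_on_subset subsetD)

lemma Cls_t: "continuous_on UNIV g \<Longrightarrow> Cls S (\<lambda>x t. g t)"
  unfolding Cls_def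
  apply (rule exI[of _ "\<lambda>x t. 0"])
  apply (auto intro!: continuous_intros continuous_on_compose2[of UNIV g] simp: case_prod_beta zero_blinfun.rep_eq)
  done

lemma Cls_entry: "Cls S (\<lambda>x t. x $ i $ j)"
proof -
  have bl: "bounded_linear (\<lambda>v::'a mat. v $ i $ j)"
    by (intro bounded_linear_compose[OF bounded_linear_vec_nth] bounded_linear_vec_nth)
  show ?thesis unfolding Cls_def
    apply (rule exI[of _ "\<lambda>x t. Blinfun (\<lambda>v. v $ i $ j)"])
    apply (auto simp: bounded_linear_Blinfun_apply[OF bl] cscale_def case_prod_beta
        intro!: continuous_intros bounded_linear_imp_has_derivative bl)
    done
qed

lemma Cls_add: "Cls S f \<Longrightarrow> Cls S g \<Longrightarrow> Cls S (\<lambda>x t. f x t + g x t)"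
  unfolding Cls_def
  apply (elim exE conjE)
  subgoal for fd gd
    apply (rule exI[of _ "\<lambda>x t. fd x t + gd x t"])
    apply (auto simp: case_prod_beta blinfun.add_left algebra_simps intro!: continuous_intros derivative_eq_intros)
    done
  done

lemma Cls_mult: "Cls S f \<Longrightarrow> Cls S g \<Longrightarrow> Cls S (\<lambda>x t. f x t * g x t)"
  unfolding Cls_def
  apply (elim exE conjE)
  subgoal for fd gd
    apply (rule exI[of _ "\<lambda>x t. scl (f x t) (gd x t) + scl (g x t) (fd x t)"])
    apply (auto simp: blinfun.add_left algebra_simps intro!: derivative_eq_intros continuous_intros)
    done
  done

lemma Cls_const: "Cls S (\<lambda>x t. c)"
  using Cls_t[of "\<lambda>t. c"] by simp

lemma Cls_neg: "Cls S f \<Longrightarrow> Cls S (\<lambda>x t. - f x t)"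
  using Cls_mult[OF Cls_const[of S "-1"]] by simp

lemma Cls_diff: "Cls S f \<Longrightarrow> Cls S g \<Longrightarrow> Cls S (\<lambda>x t. f x t - g x t)"
  using Cls_add[OF _ Cls_neg] by simp

lemma Cls_sum: "finite A \<Longrightarrow> (\<And>i. i \<in> A \<Longrightarrow> Cls S (f i)) \<Longrightarrow> Cls S (\<lambda>x t. \<Sum>i\<in>A. f i x t)"
  by (induction A rule: finite_induct) (auto intro!: Cls_add Cls_const)

lemma Cls_prod: "finite A \<Longrightarrow> (\<And>i. i \<in> A \<Longrightarrow> Cls S (f i)) \<Longrightarrow> Cls S (\<lambda>x t. \<Prod>i\<in>A. f i x t)"
  by (induction A rule: finite_induct) (auto intro!: Cls_mult Cls_const)

lemma Cls_pow: "Cls S f \<Longrightarrow> Cls S (\<lambda>x t. f x t ^ k)"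
  by (induction k) (auto intro!: Cls_mult Cls_const)

lemma Cls_inverse: assumes "Cls S f" "\<And>x t. (x,t) \<in> S \<Longrightarrow> f x t \<noteq> 0"
  shows "Cls S (\<lambda>x t. inverse (f x t))"
  using assms(1) unfolding Cls_def
  apply (elim exE conjE)
  subgoal for fd
    apply (rule exI[of _ "\<lambda>x t. scl (uminus (inverse (f x t) ^ 2)) (fd x t)"])
    apply (auto simp: algebra_simps power2_eq_square intro!: derivative_eq_intros continuous_intros assms(2))
    done
  done

lemma Cls_divide: "Cls S f \<Longrightarrow> Cls S g \<Longrightarrow> (\<And>x t. (x,t) \<in> S \<Longrightarrow> g x t \<noteq> 0) \<Longrightarrow> Cls S (\<lambda>x t. f x t / g x t)"
  using Cls_mult[of S f "\<lambda>x t. inverse (g x t)"] Cls_inverse[of S g] by (simp add: divide_inverse)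




definition PCls :: "(('n::finite) mat \<Rightarrow> complex poly) \<Rightarrow> bool" where
  "PCls p \<longleftrightarrow> (\<forall>k. Cls UNIV (\<lambda>x t. coeff (p x) k))"

lemma PCls_add: "PCls p \<Longrightarrow> PCls q \<Longrightarrow> PCls (\<lambda>x. p x + q x)"
  unfolding PCls_def by (auto intro!: Cls_add)

lemma PCls_mult: "PCls p \<Longrightarrow> PCls q \<Longrightarrow> PCls (\<lambda>x. p x * q x)"
  unfolding PCls_def coeff_mult by (auto intro!: Cls_sum Cls_mult)

lemma PCls_const: "PCls (\<lambda>x. c)"
  unfolding PCls_def by (auto intro!: Cls_const)

lemma PCls_sum: "finite A \<Longrightarrow> (\<And>i. i \<in> A \<Longrightarrow> PCls (f i)) \<Longrightarrow> PCls (\<lambda>x. \<Sum>i\<in>A. f i x)"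
  by (induction A rule: finite_induct) (auto intro!: PCls_add PCls_const)

lemma PCls_prod: "finite A \<Longrightarrow> (\<And>i. i \<in> A \<Longrightarrow> PCls (f i)) \<Longrightarrow> PCls (\<lambda>x. \<Prod>i\<in>A. f i x)"
  by (induction A rule: finite_induct) (auto intro!: PCls_mult PCls_const)

lemma PCls_entry: "PCls (\<lambda>x. c - [: x $ i $ j :])"
  unfolding PCls_def
proof
  fix k
  show "Cls UNIV (\<lambda>x t. coeff (c - [:x $ i $ j:]) k)"
  proof (cases k)
    case 0
    then show ?thesis by (auto intro!: Cls_diff Cls_const Cls_entry)
  next
    case (Suc m)
    then show ?thesis by (auto intro!: Cls_const)
  qed
qed

lemma PCls_charpoly: "PCls (charpoly :: ('n::finite) mat \<Rightarrow> _)"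
  unfolding charpoly_def det_def
  by (auto intro!: PCls_sum PCls_mult PCls_const PCls_prod PCls_entry)

lemma Cls_coeff_charpoly: "Cls S (\<lambda>x t. coeff (charpoly (x :: ('n::finite) mat)) k)"
  using PCls_charpoly unfolding PCls_def by (auto intro: Cls_mono)




lemma poly_sum_upto: fixes p :: "complex poly" assumes "degree p \<le> N" shows "poly p z = (\<Sum>i\<le>N. coeff p i * z ^ i)"
proof -
  have "poly p z = (\<Sum>i\<le>degree p. coeff p i * z ^ i)" by (rule poly_altdef)
  also have "\<dots> = (\<Sum>i\<le>N. coeff p i * z ^ i)"
    by (rule sum.mono_neutral_left) (auto simp: assms coeff_eq_0)
  finally show ?thesis .
qed

lemma charpoly_entry_degree:
  "degree ((\<chi> i j. (if i = j then [:0, 1:] else 0) - [: A $ i $ j :]) $ i $ j :: complex poly) \<le> (if i = j then 1 else 0)"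
  by (auto simp: degree_pCons_eq_if intro: order.trans[OF degree_diff_le])

lemma charpoly_degree_coeff:
  fixes A :: "('n::finite) mat"
  shows "degree (charpoly A) \<le> CARD('n) \<and> coeff (charpoly A) CARD('n) = 1"
proof -
  define E where "E = (\<chi> i j. (if i = j then [:0, 1:] else 0) - [: A $ i $ j :] :: complex poly ^'n^'n)"
  define T where "T p = of_int (sign p) * (\<Prod>i\<in>UNIV. E $ i $ p i)" for p
  have ch: "charpoly A = (\<Sum>p\<in>{p. p permutes (UNIV::'n set)}. T p)"
    unfolding charpoly_def det_def E_def T_def by simp
  have degT: "degree (T p) \<le> CARD('n) - (if p = id then 0 else 1)" if "p permutes UNIV" for p
  proof -
    have "degree (T p) \<le> degree (\<Prod>i\<in>UNIV. E $ i $ p i)"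
      unfolding T_def by (rule order.trans[OF degree_mult_le]) simp
    also have "\<dots> \<le> (\<Sum>i\<in>UNIV. degree (E $ i $ p i))"
      using degree_prod_sum_le[of UNIV "\<lambda>i. E $ i $ p i"] by (simp add: o_def)
    also have "\<dots> \<le> (\<Sum>i\<in>UNIV. (if i = p i then 1 else 0 :: nat))"
      by (rule sum_mono) (use charpoly_entry_degree[of A] in \<open>auto simp: E_def\<close>)
    also have "\<dots> \<le> CARD('n) - (if p = id then 0 else 1)"
    proof (cases "p = id")
      case True
      then show ?thesis by simp
    next
      case False
      then obtain k where k: "p k \<noteq> k" by (metis eq_id_iff)
      have "(\<Sum>i\<in>UNIV. (if i = p i then 1 else 0 :: nat)) = (\<Sum>i\<in>UNIV-{k}. (if i = p i then 1 else 0 :: nat))"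
        by (rule sum.mono_neutral_right) (use k in auto)
      also have "\<dots> \<le> (\<Sum>i\<in>UNIV-{k}. 1)" by (rule sum_mono) auto
      also have "\<dots> = CARD('n) - 1" by (simp add: card_Diff_singleton)
      finally show ?thesis using False by simp
    qed
    finally show ?thesis .
  qed
  have deg: "degree (charpoly A) \<le> CARD('n)"
    unfolding ch by (rule degree_sum_le) (use degT in force)+
  have "coeff (charpoly A) CARD('n) = (\<Sum>p\<in>{p. p permutes (UNIV::'n set)}. coeff (T p) CARD('n))"
    unfolding ch by (simp add: coeff_sum)
  also have "\<dots> = coeff (T id) CARD('n) + (\<Sum>p\<in>{p. p permutes (UNIV::'n set)} - {id}. coeff (T p) CARD('n))"
    by (subst sum.remove[of _ id]) (auto simp: permutes_id)
  also have "(\<Sum>p\<in>{p. p permutes (UNIV::'n set)} - {id}. coeff (T p) CARD('n)) = 0"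
  proof (rule sum.neutral, rule ballI)
    fix p assume p: "p \<in> {p. p permutes (UNIV::'n set)} - {id}"
    have c: "CARD('n) > 0" by simp
    have "degree (T p) \<le> CARD('n) - 1" using degT[of p] p by auto
    then have "degree (T p) < CARD('n)" using c by linarith
    then show "coeff (T p) CARD('n) = 0" by (simp add: coeff_eq_0)
  qed
  also have "coeff (T id) CARD('n) + 0 = 1"
  proof -
    have Eid: "E $ i $ id i = [:- A $ i $ i, 1:]" for i
      by (simp add: E_def)
    have "T id = (\<Prod>i\<in>UNIV. [:- A $ i $ i, 1:])" using Eid by (simp add: T_def sign_id)
    moreover have "degree (\<Prod>i\<in>(UNIV::'n set). [:- A $ i $ i, 1:]) = CARD('n)"
      by (subst degree_prod_eq_sum_degree) auto
    moreover have "lead_coeff (\<Prod>i\<in>(UNIV::'n set). [:- A $ i $ i, 1:]) = 1"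
      by (simp add: lead_coeff_prod)
    ultimately show ?thesis by simp
  qed
  finally show ?thesis using deg by simp
qed

lemma poly_charpoly_sum:
  fixes A :: "('n::finite) mat"
  shows "poly (charpoly A) z = (\<Sum>i\<le>CARD('n). coeff (charpoly A) i * z ^ i)"
  using charpoly_degree_coeff[of A] poly_sum_upto by blast

lemma poly_pderiv_charpoly_sum:
  fixes A :: "('n::finite) mat"
  shows "poly (pderiv (charpoly A)) z = (\<Sum>i\<le>CARD('n). of_nat (Suc i) * coeff (charpoly A) (Suc i) * z ^ i)"
  using charpoly_degree_coeff[of A]
  by (subst poly_sum_upto[where N="CARD('n)"]) (auto simp: degree_pderiv coeff_pderiv)

lemma Cls_poly_charpoly:
  assumes "continuous_on UNIV g"
  shows "Cls S (\<lambda>x t. poly (charpoly (x::('n::finite) mat)) (g t))"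
    and "Cls S (\<lambda>x t. poly (pderiv (charpoly (x::('n::finite) mat))) (g t))"
  unfolding poly_charpoly_sum poly_pderiv_charpoly_sum
  by (auto intro!: Cls_sum Cls_mult Cls_coeff_charpoly Cls_const Cls_pow Cls_t assms continuous_on_power)




definition psum :: "real \<Rightarrow> nat \<Rightarrow> ('n::finite) mat \<Rightarrow> complex" where
  "psum r k M = contour_integral (circlepath 0 r)
      (\<lambda>z. deriv (poly (charpoly M)) z * z ^ k / poly (charpoly M) z)"

lemma deriv_poly_eq: "deriv (poly p) = poly (pderiv (p :: complex poly))"
  by (rule ext, rule DERIV_imp_deriv, rule poly_DERIV)

lemma hol_psum:
  fixes M0 :: "('n::finite) mat"
  assumes "open W" "M0 \<in> W" "r > 0"
    and nz: "\<And>M z. M \<in> W \<Longrightarrow> cmod z = r \<Longrightarrow> poly (charpoly M) z \<noteq> 0"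
  shows "\<exists>D. (psum r k has_derivative D) (at M0) \<and> (\<forall>c v. D (cscale c v) = c * D v)"
proof -
  obtain e where e: "e > 0" "ball M0 e \<subseteq> W" using assms(1,2) open_contains_ball by blast
  define \<gamma> where "\<gamma> t = complex_of_real r * exp (2 * of_real pi * \<i> * of_real t)" for t :: real
  define \<gamma>' where "\<gamma>' t = 2 * pi * \<i> * r * exp (2 * of_real pi * \<i> * of_real t)" for t :: real
  define f where "f M t = poly (pderiv (charpoly M)) (\<gamma> t) * \<gamma> t ^ k / poly (charpoly M) (\<gamma> t) * \<gamma>' t"
    for M :: "'n mat" and t
  have cg: "continuous_on UNIV \<gamma>" "continuous_on UNIV \<gamma>'"
    unfolding \<gamma>_def \<gamma>'_def by (auto intro!: continuous_intros)
  have ng: "cmod (\<gamma> t) = r" for t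
    using assms(3) by (simp add: \<gamma>_def norm_mult)
  have int: "psum r k M = integral (cbox 0 1) (f M)" for M
    unfolding psum_def contour_integral_integral deriv_poly_eq vector_derivative_circlepath
    unfolding f_def circlepath \<gamma>_def \<gamma>'_def
    by (simp add: cbox_interval)
  define S where "S = ball M0 e \<times> cbox (0::real) 1"
  have "Cls S f"
    unfolding f_def
    using nz ng e(2)
    by (intro Cls_mult Cls_divide Cls_poly_charpoly cg Cls_pow Cls_t) (auto simp: S_def)
  then obtain fd where fd: "continuous_on S (\<lambda>p. fd (fst p) (snd p))"
      "continuous_on S (\<lambda>p. f (fst p) (snd p))"
      "\<And>x t. (x,t) \<in> S \<Longrightarrow> ((\<lambda>y. f y t) has_derivative blinfun_apply (fd x t)) (at x)"
      "\<And>x t c v. (x,t) \<in> S \<Longrightarrow> fd x t (cscale c v) = c * fd x t v"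
    unfolding Cls_def by blast
  have contx: "continuous_on (cbox 0 1) (\<lambda>t. g (x, t))" if "x \<in> ball M0 e" "continuous_on S g" for x g
    by (rule continuous_on_compose2[OF that(2)]) (use that(1) in \<open>auto intro!: continuous_intros simp: S_def\<close>)
  have L: "((\<lambda>x. integral (cbox 0 1) (f x)) has_derivative integral (cbox 0 1) (fd M0)) (at M0 within ball M0 e)"
  proof (rule leibniz_rule)
    show "((\<lambda>x. f x t) has_derivative blinfun_apply (fd x t)) (at x within ball M0 e)"
      if "x \<in> ball M0 e" "t \<in> cbox 0 1" for x t
      using fd(3)[of x t] that by (auto simp: S_def intro: has_derivative_at_withinI)
    show "f x integrable_on cbox 0 1" if "x \<in> ball M0 e" for x
      using contx[OF that fd(2)] by (auto intro: integrable_continuous integrable_continuous_real)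
    show "continuous_on (ball M0 e \<times> cbox 0 1) (\<lambda>(x, t). fd x t)"
      using fd(1) by (simp add: S_def case_prod_beta)
  qed (use e in auto)
  have der: "(psum r k has_derivative integral (cbox 0 1) (fd M0)) (at M0)"
  proof -
    have "psum r k = (\<lambda>x. integral (cbox 0 1) (f x))" using int by (simp add: fun_eq_iff)
    then show ?thesis using at_within_open[of M0 "ball M0 e"] e(1) L by simp
  qed
  have intg: "fd M0 integrable_on cbox 0 1"
    using contx[OF _ fd(1)] e(1) by (auto intro: integrable_continuous integrable_continuous_real)
  show ?thesis
  proof (intro exI conjI allI, rule der)
    fix c v
    have "blinfun_apply (integral (cbox 0 1) (fd M0)) (cscale c v) = integral (cbox 0 1) (\<lambda>t. c * fd M0 t v)"
    proof -
      have "integral (cbox 0 1) (\<lambda>t. fd M0 t (cscale c v)) = integral (cbox 0 1) (\<lambda>t. c * fd M0 t v)"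
        by (rule integral_cong) (use e(1) in \<open>auto simp: fd(4) S_def\<close>)
      then show ?thesis using intg by (simp add: blinfun_apply_integral)
    qed
    also have "\<dots> = c * blinfun_apply (integral (cbox 0 1) (fd M0)) v"
      using intg by (simp add: blinfun_apply_integral)
    finally show "blinfun_apply (integral (cbox 0 1) (fd M0)) (cscale c v) = c * blinfun_apply (integral (cbox 0 1) (fd M0)) v" .
  qed
qed




fun F :: "(nat \<Rightarrow> complex) \<Rightarrow> nat \<Rightarrow> complex" where
  "F p j = (if j = 0 then 1 else - (\<Sum>i<j. F p i * p (j - i)) / of_nat j)"

declare F.simps[simp del]

definition pw :: "complex multiset \<Rightarrow> nat \<Rightarrow> complex" where
  "pw L k = (\<Sum>a\<in>#L. a ^ k)"

definition RR :: "complex multiset \<Rightarrow> complex poly" where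
  "RR L = (\<Prod>a\<in>#L. [:1, - a:])"

definition SS :: "nat \<Rightarrow> complex multiset \<Rightarrow> complex poly" where
  "SS N L = (\<Sum>k=1..N. monom (pw L k) k)"

definition GG :: "nat \<Rightarrow> complex \<Rightarrow> complex poly" where
  "GG N a = (\<Sum>k=1..N. monom (a ^ k) k)"

lemma u_monom: "[:1, -a:] * monom c m = monom c m - monom (a * c) (Suc m)" for a c :: complex
  by (simp add: monom_Suc smult_monom minus_monom[symmetric])

lemma ring_id:
  fixes X u R R' S G d m :: "'a::comm_ring_1"
  assumes "X * d = - m"
  shows "X * (u * R' + R * d) + u * R * (S + G) = u * (X * R' + R * S) + R * (u * G - m)"
proof -
  have "X * (u * R' + R * d) + u * R * (S + G) - (u * (X * R' + R * S) + R * (u * G - m)) = R * (X * d + m)"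
    by (simp add: algebra_simps)
  also have "\<dots> = 0" using assms by simp
  finally show ?thesis by simp
qed

lemma geo: "[:1, -a:] * GG N a = monom a 1 - monom (a ^ Suc N) (Suc N)"
proof (induction N)
  case 0
  then show ?case by (simp add: GG_def)
next
  case (Suc N)
  have "GG (Suc N) a = GG N a + monom (a ^ Suc N) (Suc N)"
    by (simp add: GG_def)
  then show ?case by (simp only: distrib_left Suc.IH u_monom) simp
qed

lemma SS_add: "SS N (add_mset a L) = SS N L + GG N a"
  by (simp add: SS_def GG_def pw_def sum.distrib add_monom[symmetric])

lemma newton_poly:
  "\<forall>j\<le>N. coeff (pCons 0 (pderiv (RR L)) + RR L * SS N L) j = 0"
proof (induction L)
  case empty
  then show ?case by (simp add: RR_def SS_def pw_def)
next
  case (add a L)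
  define u where "u = [:1, -a:]"
  define T where "T = pCons 0 (pderiv (RR L)) + RR L * SS N L"
  have R': "RR (add_mset a L) = u * RR L" by (simp add: RR_def u_def)
  have "pCons 0 (pderiv (RR (add_mset a L))) + RR (add_mset a L) * SS N (add_mset a L)
        = u * T + RR L * (u * GG N a - monom a 1)"
  proof -
    define X :: "complex poly" where "X = [:0,1:]"
    have pc: "pCons 0 p = X * p" for p :: "complex poly" by (simp add: X_def)
    have du: "pderiv u = [:-a:]" by (simp add: u_def pderiv_pCons)
    have xa: "X * [:-a:] = - monom a 1" by (simp add: monom_Suc monom_0 X_def)
    show ?thesis
      unfolding R' SS_add T_def pc pderiv_mult du
      using ring_id[OF xa] by simp
  qed
  also have "\<dots> = u * T - RR L * monom (a ^ Suc N) (Suc N)"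
    unfolding u_def geo by (simp del: mult_pCons_left)
  finally have eq: "pCons 0 (pderiv (RR (add_mset a L))) + RR (add_mset a L) * SS N (add_mset a L)
        = u * T - RR L * monom (a ^ Suc N) (Suc N)" .
  show ?case
  proof (intro allI impI)
    fix j assume j: "j \<le> N"
    have T0: "\<forall>j\<le>N. coeff T j = 0" using add by (simp add: T_def)
    have "coeff (u * T) j = coeff T j - a * (if j = 0 then 0 else coeff T (j - 1))"
      by (simp add: u_def coeff_pCons split: nat.split)
    also have "\<dots> = 0" using T0 j by auto
    finally have 1: "coeff (u * T) j = 0" .
    have 2: "coeff (RR L * monom (a ^ Suc N) (Suc N)) j = 0"
      using j by (simp add: mult.commute[of "RR L"] coeff_monom_mult)
    show "coeff (pCons 0 (pderiv (RR (add_mset a L))) + RR (add_mset a L) * SS N (add_mset a L)) j = 0"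
      unfolding eq using 1 2 by simp
  qed
qed

lemma coeff_SS: "coeff (SS N L) m = (if 1 \<le> m \<and> m \<le> N then pw L m else 0)"
  by (auto simp: SS_def coeff_sum coeff_monom)

lemma newton_rec:
  assumes "j > 0"
  shows "of_nat j * coeff (RR L) j = - (\<Sum>i<j. coeff (RR L) i * pw L (j - i))"
proof -
  obtain m where m: "j = Suc m" using assms by (cases j) auto
  have "coeff (pCons 0 (pderiv (RR L)) + RR L * SS j L) j = 0"
    using newton_poly[of j L] by simp
  moreover have "coeff (pCons 0 (pderiv (RR L))) j = of_nat j * coeff (RR L) j"
    by (simp add: m coeff_pderiv)
  moreover have "coeff (RR L * SS j L) j = (\<Sum>i<j. coeff (RR L) i * pw L (j - i))"
  proof -
    have "coeff (RR L * SS j L) j = (\<Sum>i\<le>j. coeff (RR L) i * coeff (SS j L) (j - i))"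
      by (rule coeff_mult)
    also have "\<dots> = (\<Sum>i\<le>j. if i < j then coeff (RR L) i * pw L (j - i) else 0)"
      by (rule sum.cong) (auto simp: coeff_SS)
    also have "\<dots> = (\<Sum>i<j. coeff (RR L) i * pw L (j - i))"
      by (simp add: sum.If_cases, rule sum.cong) auto
    finally show ?thesis .
  qed
  ultimately show ?thesis by (simp add: eq_neg_iff_add_eq_0)
qed

lemma coeff_RR_0: "coeff (RR L) 0 = 1"
  by (induction L) (auto simp: RR_def coeff_mult_0)

lemma coeff_RR: "coeff (RR L) j = F (pw L) j"
proof (induction j rule: less_induct)
  case (less j)
  show ?case
  proof (cases "j = 0")
    case True
    then show ?thesis by (simp add: coeff_RR_0 F.simps)
  next
    case False
    then have "coeff (RR L) j = - (\<Sum>i<j. coeff (RR L) i * pw L (j - i)) / of_nat j"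
      using newton_rec[of j L] by (simp add: field_simps)
    also have "\<dots> = - (\<Sum>i<j. F (pw L) i * pw L (j - i)) / of_nat j"
      using less by simp
    also have "\<dots> = F (pw L) j" using False by (simp add: F.simps[of _ j])
    finally show ?thesis .
  qed
qed

lemma PP_facts: "reflect_poly (\<Prod>x\<in>#L. [:- x, 1:]) = RR L \<and> degree (\<Prod>x\<in>#L. [:- x, 1:]) = size L"
proof (induction L)
  case empty
  then show ?case by (simp add: RR_def)
next
  case (add a L)
  have r: "reflect_poly [:- a, 1:] = [:1, - a:]"
    by (simp add: reflect_poly_def)
  have nz: "(\<Prod>x\<in>#L. [:- x, 1:]) \<noteq> 0"
    using add by (auto simp: prod_mset_zero_iff)
  have "reflect_poly (\<Prod>x\<in>#add_mset a L. [:- x, 1:]) = reflect_poly [:- a, 1:] * reflect_poly (\<Prod>x\<in>#L. [:- x, 1:])"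
    by (simp del: mult_pCons_left add: reflect_poly_mult)
  moreover have "degree (\<Prod>x\<in>#add_mset a L. [:- x, 1:]) = degree [:- a, 1:] + degree (\<Prod>x\<in>#L. [:- x, 1:])"
    using nz by (simp del: mult_pCons_left add: degree_mult_eq)
  ultimately show ?case using add r by (simp del: mult_pCons_left add: RR_def)
qed

lemma final_poly:
  fixes L :: "complex multiset"
  shows "monom 1 (size L) + (\<Sum>j = 1..size L. smult ((-1) ^ j * ((-1) ^ j * F (pw L) j)) (monom 1 (size L - j)))
         = (\<Prod>x\<in>#L. [:- x, 1:])"
proof (rule poly_eqI)
  fix k
  define m where "m = size L"
  define P where "P = (\<Prod>x\<in>#L. [:- x, 1:])"
  have sg: "(-1) ^ j * ((-1) ^ j * c) = (c::complex)" for j c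
    by (simp add: mult.assoc[symmetric] power_mult_distrib[symmetric])
  have degP: "degree P = m" and RP: "reflect_poly P = RR L" using PP_facts[of L] by (auto simp: P_def m_def)
  have cP: "coeff P k = (if k \<le> m then F (pw L) (m - k) else 0)"
  proof (cases "k \<le> m")
    case True
    have "coeff (RR L) (m - k) = coeff P k"
      using True by (simp add: RP[symmetric] coeff_reflect_poly degP)
    then show ?thesis using True by (simp add: coeff_RR)
  next
    case False
    then show ?thesis using degP by (simp add: coeff_eq_0)
  qed
  have "coeff (monom 1 m + (\<Sum>j = 1..m. smult ((-1) ^ j * ((-1) ^ j * F (pw L) j)) (monom 1 (m - j)))) k
      = (if k = m then 1 else 0) + (\<Sum>j = 1..m. if j = m - k \<and> k < m then F (pw L) j else 0)"
  proof -
    have "coeff (smult ((-1) ^ j * ((-1) ^ j * F (pw L) j)) (monom 1 (m - j))) k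
        = (if j = m - k \<and> k < m then F (pw L) j else 0)" if "j \<in> {1..m}" for j
      using that by (auto simp: sg coeff_monom)
    then show ?thesis by (simp add: coeff_sum coeff_monom)
  qed
  also have "\<dots> = coeff P k"
  proof (cases "k < m")
    case True
    then show ?thesis by (simp add: cP sum.delta)
  next
    case False
    then show ?thesis using cP by (auto simp: F.simps)
  qed
  finally show "coeff (monom 1 (size L) + (\<Sum>j = 1..size L. smult ((-1) ^ j * ((-1) ^ j * F (pw L) j)) (monom 1 (size L - j)))) k = coeff (\<Prod>x\<in>#L. [:- x, 1:]) k"
    by (simp add: m_def P_def)
qed




lemma sum_mset_count_gen:
  fixes f :: "'a \<Rightarrow> complex"
  assumes "finite A" "set_mset M \<subseteq> A"
  shows "(\<Sum>a\<in>#M. f a) = (\<Sum>x\<in>A. of_nat (count M x) * f x)"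
  using assms(2)
proof (induction M)
  case empty
  then show ?case by simp
next
  case (add a M)
  have "(\<Sum>x\<in>A. of_nat (count (add_mset a M) x) * f x)
      = (\<Sum>x\<in>A. of_nat (count M x) * f x) + (\<Sum>x\<in>A. if x = a then f x else 0)"
    by (simp add: sum.distrib[symmetric] algebra_simps, rule sum.cong) (auto simp: algebra_simps)
  also have "(\<Sum>x\<in>A. if x = a then f x else 0) = f a"
    using add.prems assms(1) by (simp add: sum.delta)
  finally show ?case using add by simp
qed

lemma wind_circ:
  assumes "r > 0" "cmod p \<noteq> r"
  shows "winding_number (circlepath 0 r) p = (if cmod p < r then 1 else 0)"
proof (cases "cmod p < r")
  case True
  then show ?thesis using winding_number_circlepath[of p 0 r] by simp
next
  case False
  then have "cmod p > r" using assms(2) by simp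
  have "winding_number (circlepath 0 r) p = 0"
  proof (rule winding_number_zero_outside[OF _ convex_cball[of 0 r]])
    show "path (circlepath 0 r)" by simp
    show "pathfinish (circlepath 0 r) = pathstart (circlepath 0 r)" by simp
    show "p \<notin> cball 0 r" using \<open>cmod p > r\<close> by simp
    show "path_image (circlepath 0 r) \<subseteq> cball 0 r"
      using assms(1) by (simp add: path_image_circlepath_nonneg sphere_cball)
  qed
  then show ?thesis using False by simp
qed

lemma zorder_poly:
  fixes P :: "complex poly"
  assumes "P \<noteq> 0"
  shows "zorder (poly P) a = int (order a P)"
proof -
  obtain q where q: "P = [:- a, 1:] ^ order a P * q" "\<not> [:- a, 1:] dvd q"
    using order_decomp[OF assms] by blast
  have qa: "poly q a \<noteq> 0" using q(2) poly_eq_0_iff_dvd by blast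
  show ?thesis
  proof (rule zorder_eqI[of UNIV a "poly q"])
    show "poly P w = poly q w * (w - a) powi int (order a P)" for w
      by (subst q(1)) (simp add: power_int_of_nat)
  qed (use qa in \<open>auto intro!: holomorphic_intros\<close>)
qed

lemma poly_holo[holomorphic_intros]: "poly P holomorphic_on S"
  by (auto intro!: holomorphic_intros simp: field_differentiable_def)

definition Lin :: "real \<Rightarrow> complex poly \<Rightarrow> complex multiset" where
  "Lin r P = filter_mset (\<lambda>a. cmod a < r) (proots P)"

lemma sum_inside:
  fixes P :: "complex poly" and f :: "complex \<Rightarrow> complex"
  assumes "P \<noteq> 0" "r > 0" "\<And>z. cmod z = r \<Longrightarrow> poly P z \<noteq> 0"
  shows "(\<Sum>p\<in>{z. poly P z = 0}. winding_number (circlepath 0 r) p * f p * of_int (zorder (poly P) p))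
       = (\<Sum>a\<in>#Lin r P. f a)"
proof -
  have fin: "finite {z. poly P z = 0}" using assms(1) poly_roots_finite by blast
  have "(\<Sum>a\<in>#Lin r P. f a) = (\<Sum>x\<in>{z. poly P z = 0}. of_nat (count (Lin r P) x) * f x)"
    by (rule sum_mset_count_gen[OF fin]) (use assms(1) in \<open>auto simp: Lin_def\<close>)
  also have "\<dots> = (\<Sum>p\<in>{z. poly P z = 0}. winding_number (circlepath 0 r) p * f p * of_int (zorder (poly P) p))"
  proof (rule sum.cong[OF refl])
    fix p assume p: "p \<in> {z. poly P z = 0}"
    then have "cmod p \<noteq> r" using assms(3) by auto
    then show "of_nat (count (Lin r P) p) * f p = winding_number (circlepath 0 r) p * f p * of_int (zorder (poly P) p)"
      using assms by (simp add: wind_circ zorder_poly Lin_def)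
  qed
  finally show ?thesis by simp
qed

lemma psum_formula:
  fixes P :: "complex poly"
  assumes "P \<noteq> 0" "r > 0" "\<And>z. cmod z = r \<Longrightarrow> poly P z \<noteq> 0"
  shows "contour_integral (circlepath 0 r) (\<lambda>z. deriv (poly P) z * z ^ k / poly P z)
       = 2 * pi * \<i> * (\<Sum>a\<in>#Lin r P. a ^ k)"
proof -
  have fin: "finite {z. poly P z = 0}" using assms(1) poly_roots_finite by blast
  have "contour_integral (circlepath 0 r) (\<lambda>z. deriv (poly P) z * z ^ k / poly P z)
     = 2 * pi * \<i> * (\<Sum>p\<in>{w \<in> UNIV. poly P w = 0 \<or> w \<in> {}}. winding_number (circlepath 0 r) p * p ^ k * zorder (poly P) p)"
  proof (rule argument_principle[of UNIV "poly P" "{}" "\<lambda>z. z ^ k"])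
    show "path_image (circlepath 0 r) \<subseteq> UNIV - {w \<in> UNIV. poly P w = 0 \<or> w \<in> {}}"
      using assms(2,3) by (auto simp: path_image_circlepath_nonneg)
  qed (simp_all add: connected_UNIV fin poly_holo holomorphic_on_power holomorphic_on_ident)
  also have "\<dots> = 2 * pi * \<i> * (\<Sum>a\<in>#Lin r P. a ^ k)"
  proof -
    have se: "{w \<in> UNIV. poly P w = 0 \<or> w \<in> {}} = {z. poly P z = 0}" by auto
    have si: "(\<Sum>p\<in>{z. poly P z = 0}. winding_number (circlepath 0 r) p * p ^ k * of_int (zorder (poly P) p))
       = (\<Sum>a\<in>#Lin r P. a ^ k)"
      by (rule sum_inside[OF assms])
    show ?thesis unfolding se si ..
  qed
  finally show ?thesis .
qed

lemma count_inside:
  fixes P Q :: "complex poly"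
  assumes "Q \<noteq> 0" "r > 0"
    and less: "\<And>z. cmod z = r \<Longrightarrow> cmod (poly P z - poly Q z) < cmod (poly Q z)"
  shows "P \<noteq> 0" "\<And>z. cmod z = r \<Longrightarrow> poly P z \<noteq> 0" "size (Lin r P) = size (Lin r Q)"
proof -
  show nzP: "poly P z \<noteq> 0" if "cmod z = r" for z
  proof
    assume "poly P z = 0"
    then show False using less[OF that] by simp
  qed
  show P0: "P \<noteq> 0"
  proof
    assume "P = 0"
    then show False using nzP[of "of_real r"] assms(2) by simp
  qed
  have nzQ: "poly Q z \<noteq> 0" if "cmod z = r" for z
  proof
    assume "poly Q z = 0"
    then show False using less[OF that] by simp
  qed
  have finP: "finite {p. poly P p = 0}" using P0 poly_roots_finite by blast
  have finQ: "finite {p. poly Q p = 0}" using assms(1) poly_roots_finite by blast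
  have R: "(\<Sum>p\<in>{p \<in> UNIV. poly Q p + (poly P p - poly Q p) = 0}. winding_number (circlepath 0 r) p * zorder (\<lambda>p. poly Q p + (poly P p - poly Q p)) p)
      = (\<Sum>p\<in>{p \<in> UNIV. poly Q p = 0}. winding_number (circlepath 0 r) p * zorder (poly Q) p)"
  proof (rule Rouche_theorem)
    show "\<forall>z\<in>path_image (circlepath 0 r). cmod (poly P z - poly Q z) < cmod (poly Q z)"
      using assms(2) less by (auto simp: path_image_circlepath_nonneg)
    show "finite {p \<in> UNIV. poly Q p + (poly P p - poly Q p) = 0}" using finP by simp
    show "finite {p \<in> UNIV. poly Q p = 0}" using finQ by simp
    show "poly Q holomorphic_on UNIV" by (rule poly_holo)
    show "(\<lambda>z. poly P z - poly Q z) holomorphic_on UNIV"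
      by (intro holomorphic_on_diff poly_holo)
  qed (auto simp: connected_UNIV)
  have e: "(\<lambda>p. poly Q p + (poly P p - poly Q p)) = poly P" by auto
  have se1: "{p \<in> UNIV. poly Q p + (poly P p - poly Q p) = 0} = {z. poly P z = 0}" by auto
  have se2: "{p \<in> UNIV. poly Q p = 0} = {z. poly Q z = 0}" by auto
  have one: "(\<Sum>a\<in>#M. (1::complex)) = of_nat (size M)" for M :: "complex multiset"
    by (induction M) auto
  have sP: "(\<Sum>p\<in>{z. poly P z = 0}. winding_number (circlepath 0 r) p * 1 * of_int (zorder (poly P) p)) = (\<Sum>a\<in>#Lin r P. (1::complex))"
    by (rule sum_inside[OF P0 assms(2) nzP])
  have sQ: "(\<Sum>p\<in>{z. poly Q z = 0}. winding_number (circlepath 0 r) p * 1 * of_int (zorder (poly Q) p)) = (\<Sum>a\<in>#Lin r Q. (1::complex))"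
    by (rule sum_inside[OF assms(1,2) nzQ])
  have "(of_nat (size (Lin r P)) :: complex) = of_nat (size (Lin r Q))"
    using R unfolding e se1 se2 one[symmetric] sP[symmetric] sQ[symmetric] mult_1_right .
  then show "size (Lin r P) = size (Lin r Q)" by (simp only: of_nat_eq_iff)
qed




definition hol_at :: "(('n::finite) mat \<Rightarrow> complex) \<Rightarrow> 'n mat \<Rightarrow> bool" where
  "hol_at f x \<longleftrightarrow> (\<exists>D. (f has_derivative D) (at x) \<and> (\<forall>c v. D (cscale c v) = c * D v))"

lemma hol_const: "hol_at (\<lambda>x. c) x"
  unfolding hol_at_def by (rule exI[of _ "\<lambda>v. 0"]) (auto intro: derivative_eq_intros)

lemma hol_add: "hol_at f x \<Longrightarrow> hol_at g x \<Longrightarrow> hol_at (\<lambda>x. f x + g x) x"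
  unfolding hol_at_def
  apply (elim exE conjE)
  subgoal for Df Dg
    by (rule exI[of _ "\<lambda>v. Df v + Dg v"]) (auto intro!: derivative_eq_intros simp: algebra_simps)
  done

lemma hol_mult: "hol_at f x \<Longrightarrow> hol_at g x \<Longrightarrow> hol_at (\<lambda>x. f x * g x) x"
  unfolding hol_at_def
  apply (elim exE conjE)
  subgoal for Df Dg
    by (rule exI[of _ "\<lambda>v. f x * Dg v + Df v * g x"]) (auto intro!: derivative_eq_intros simp: algebra_simps)
  done

lemma hol_sum: "finite A \<Longrightarrow> (\<And>i. i \<in> A \<Longrightarrow> hol_at (f i) x) \<Longrightarrow> hol_at (\<lambda>x. \<Sum>i\<in>A. f i x) x"
  by (induction A rule: finite_induct) (auto intro!: hol_add hol_const)

lemma hol_F: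
  assumes "\<And>k. hol_at (\<lambda>M. p M k) x"
  shows "hol_at (\<lambda>M. F (p M) j) x"
proof (induction j rule: less_induct)
  case (less j)
  show ?case
  proof (cases "j = 0")
    case True
    then show ?thesis by (simp add: F.simps hol_const)
  next
    case False
    have "hol_at (\<lambda>M. (- 1 / of_nat j) * (\<Sum>i<j. F (p M) i * p M (j - i))) x"
      by (intro hol_mult hol_const hol_sum) (auto intro!: hol_mult less assms)
    moreover have "(\<lambda>M. (- 1 / of_nat j) * (\<Sum>i<j. F (p M) i * p M (j - i))) = (\<lambda>M. F (p M) j)"
      using False by (auto simp: F.simps[of _ j])
    ultimately show ?thesis by simp
  qed
qed

lemma cont_coeff: "continuous_on UNIV (\<lambda>M :: ('n::finite) mat. coeff (charpoly M) i)"
proof -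
  obtain fd where fd: "\<And>x t. (x,t) \<in> (UNIV :: ('n mat \<times> real) set) \<Longrightarrow>
      ((\<lambda>y. coeff (charpoly y) i) has_derivative blinfun_apply (fd x t)) (at x)"
    using Cls_coeff_charpoly[of UNIV i] unfolding Cls_def by blast
  show ?thesis
    by (rule continuous_at_imp_continuous_on) (use fd in \<open>blast intro: has_derivative_continuous\<close>)
qed

lemma L_eq_Lin:
  fixes P :: "complex poly" and L :: "complex multiset"
  assumes P0: "P \<noteq> 0" and nz: "\<And>z. cmod z = r \<Longrightarrow> poly P z \<noteq> 0"
    and sz: "size (Lin r P) = size L" and sub: "L \<subseteq># proots P"
    and mn: "\<forall>x\<in>#L. \<forall>y\<in>#proots P - L. cmod x \<le> cmod y"
  shows "L = Lin r P"
proof -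
  define In where "In = Lin r P"
  have inside: "cmod x < r" if x: "x \<in># L" for x
  proof (rule ccontr)
    assume "\<not> cmod x < r"
    moreover have "x \<in># proots P" using x sub by (meson mset_subset_eqD)
    then have "cmod x \<noteq> r" using nz P0 by auto
    ultimately have xr: "cmod x > r" by simp
    define fL where "fL = filter_mset (\<lambda>a. cmod a < r) L"
    have fLsub: "fL \<subseteq># In" unfolding fL_def In_def Lin_def by (rule multiset_filter_mono[OF sub])
    have "L = fL + filter_mset (\<lambda>a. \<not> cmod a < r) L"
      unfolding fL_def by (rule multiset_partition)
    then have "size L = size fL + size (filter_mset (\<lambda>a. \<not> cmod a < r) L)"
      by (metis size_union)
    moreover have "x \<in># filter_mset (\<lambda>a. \<not> cmod a < r) L" using x xr by simp
    then have "filter_mset (\<lambda>a. \<not> cmod a < r) L \<noteq> {#}" by auto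
    then have "size (filter_mset (\<lambda>a. \<not> cmod a < r) L) > 0" using size_eq_0_iff_empty by (metis gr0I)
    ultimately have "size fL < size In" using sz In_def by simp
    then have "size (In - fL) > 0" using fLsub by (simp add: size_Diff_submset)
    then have "In - fL \<noteq> {#}" by auto
    then obtain y where y: "y \<in># In - fL" by (meson multiset_nonemptyE)
    have eq: "In - fL = filter_mset (\<lambda>a. cmod a < r) (proots P - L)"
      by (simp add: In_def fL_def Lin_def)
    from y have y2: "y \<in># filter_mset (\<lambda>a. cmod a < r) (proots P - L)" by (simp only: eq)
    then have "y \<in># proots P - L" "cmod y < r" by (auto simp del: filter_diff_mset)
    then show False using mn x xr by fastforce
  qed
  have "filter_mset (\<lambda>a. cmod a < r) L = L" using inside by (simp add: filter_mset_eq_conv)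
  then have "L = filter_mset (\<lambda>a. cmod a < r) L" by simp
  also have "\<dots> \<subseteq># In" unfolding In_def Lin_def by (rule multiset_filter_mono[OF sub])
  finally have "L \<subseteq># In" .
  moreover have "\<not> L \<subset># In" using mset_subset_size sz In_def by fastforce
  ultimately show ?thesis unfolding In_def by (simp add: subset_mset.le_less)
qed




theorem lemma4p1:
  fixes V :: "complex ^ 'n ^ 'n" and n0 :: nat
  assumes "V \<in> Omega"
    and "n0 \<ge> 1"
    and "order 0 (charpoly V) = n0"
  shows "\<exists>U (s0 :: nat \<Rightarrow> complex ^ 'n ^ 'n \<Rightarrow> complex). openin (top_of_set (Gn TYPE('n))) U \<and> sigma V \<in> U \<and>
           (\<forall>j\<in>{1..n0}. holomorphic_mat_on (s0 j) ((sigma :: complex ^ 'n ^ 'n \<Rightarrow> _) -` U)) \<and>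
           (\<forall>M :: complex ^ 'n ^ 'n \<in> sigma -` U. \<forall>L.
              (L \<subseteq># proots (charpoly M) \<and> size L = n0 \<and>
               (\<forall>x\<in>#L. \<forall>y\<in>#proots (charpoly M) - L. cmod x \<le> cmod y))
              \<longrightarrow> monom 1 n0 + (\<Sum>j = 1..n0. smult ((-1) ^ j * s0 j M) (monom 1 (n0 - j)))
                   = (\<Prod>x\<in>#L. [:- x, 1:]))"
proof -
  define n where "n = CARD('n)"
  define \<chi>V where "\<chi>V = charpoly V"
  have chnz: "charpoly M \<noteq> 0" for M :: "'n mat"
    using charpoly_degree_coeff[of M] by auto
  define Z where "Z = {z. poly \<chi>V z = 0 \<and> z \<noteq> 0}"
  have finZ: "finite Z"
    using poly_roots_finite[OF chnz[of V]] unfolding Z_def \<chi>V_def by (rule finite_subset[rotated]) auto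
  define r where "r = (if Z = {} then 1 else Min (cmod ` Z) / 2)"
  have r0: "r > 0"
  proof (cases "Z = {}")
    case False
    have "0 < Min (cmod ` Z)" using False finZ by (subst Min_gr_iff) (auto simp: Z_def)
    then show ?thesis using False by (simp add: r_def)
  qed (simp add: r_def)
  have rZ: "r < cmod z" if "poly \<chi>V z = 0" "z \<noteq> 0" for z
  proof -
    have zZ: "z \<in> Z" using that by (simp add: Z_def)
    then have ne: "Z \<noteq> {}" by auto
    have "Min (cmod ` Z) \<le> cmod z" using finZ zZ by (intro Min_le) auto
    moreover have "0 < Min (cmod ` Z)" using ne finZ by (subst Min_gr_iff) (auto simp: Z_def)
    ultimately show ?thesis using ne by (simp add: r_def)
  qed
  have nzV: "poly \<chi>V z \<noteq> 0" if "cmod z = r" for z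
    using rZ[of z] that r0 by (cases "z = 0") auto
  have cpoly: "continuous_on (sphere 0 r) (\<lambda>z. cmod (poly \<chi>V z))"
    by (intro continuous_intros)
  obtain z0 where z0: "z0 \<in> sphere 0 r" "\<forall>y\<in>sphere 0 r. cmod (poly \<chi>V z0) \<le> cmod (poly \<chi>V y)"
    using continuous_attains_inf[OF compact_sphere _ cpoly] r0 by auto
  define m where "m = cmod (poly \<chi>V z0)"
  have m0: "m > 0" using nzV[of z0] z0(1) by (simp add: m_def)
  have mle: "m \<le> cmod (poly \<chi>V z)" if "cmod z = r" for z
    using z0(2) that by (simp add: m_def)
  define SR where "SR = (\<Sum>i<n. r ^ i)"
  have SR0: "SR \<ge> 0" unfolding SR_def using r0 by (intro sum_nonneg) auto
  define \<delta> where "\<delta> = m / (2 * (SR + 1))"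
  have d0: "\<delta> > 0" using m0 SR0 by (simp add: \<delta>_def)
  have dSR: "\<delta> * SR < m"
  proof -
    have "\<delta> * SR = m * SR / (2 * (SR + 1))" by (simp add: \<delta>_def)
    also have "\<dots> < m"
    proof -
      have "0 \<le> SR * m" using SR0 m0 by simp
      then show ?thesis using m0 SR0 by (simp add: field_simps) (smt (verit) mult_nonneg_nonneg)
    qed
    finally show ?thesis .
  qed
  define W where "W = {M :: 'n mat. \<forall>i<n. cmod (coeff (charpoly M) i - coeff \<chi>V i) < \<delta>}"
  have bound: "cmod (poly (charpoly M) z - poly \<chi>V z) < cmod (poly \<chi>V z)"
    if M: "M \<in> W" and z: "cmod z = r" for M z
  proof -
    have cn: "coeff (charpoly M) n = 1" "coeff \<chi>V n = 1"
      using charpoly_degree_coeff[of M] charpoly_degree_coeff[of V] by (auto simp: n_def \<chi>V_def)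
    have "poly (charpoly M) z - poly \<chi>V z = (\<Sum>i\<le>n. (coeff (charpoly M) i - coeff \<chi>V i) * z ^ i)"
      unfolding \<chi>V_def poly_charpoly_sum n_def by (simp add: sum_subtractf left_diff_distrib)
    also have "\<dots> = (\<Sum>i<n. (coeff (charpoly M) i - coeff \<chi>V i) * z ^ i)"
      using cn by (simp add: lessThan_Suc_atMost[symmetric])
    finally have eq: "poly (charpoly M) z - poly \<chi>V z = (\<Sum>i<n. (coeff (charpoly M) i - coeff \<chi>V i) * z ^ i)" .
    have "cmod (poly (charpoly M) z - poly \<chi>V z) \<le> (\<Sum>i<n. cmod (coeff (charpoly M) i - coeff \<chi>V i) * r ^ i)"
      unfolding eq using z by (intro order.trans[OF norm_sum] sum_mono) (simp add: norm_mult norm_power)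
    also have "\<dots> \<le> (\<Sum>i<n. \<delta> * r ^ i)"
      using M r0 by (intro sum_mono mult_right_mono) (auto simp: W_def less_imp_le)
    also have "\<dots> = \<delta> * SR" by (simp add: SR_def sum_distrib_left)
    also have "\<dots> < m" by (rule dSR)
    also have "\<dots> \<le> cmod (poly \<chi>V z)" by (rule mle[OF z])
    finally show ?thesis .
  qed
  have openW: "open W"
  proof -
    have "W = (\<Inter>i\<in>{..<n}. {M. cmod (coeff (charpoly M) i - coeff \<chi>V i) < \<delta>})"
      by (auto simp: W_def)
    moreover have "open {M :: 'n mat. cmod (coeff (charpoly M) i - coeff \<chi>V i) < \<delta>}" for i
      by (rule open_Collect_less) (intro continuous_intros cont_coeff)+
    ultimately show ?thesis by auto
  qed
  have WM: "charpoly M \<noteq> 0 \<and> (\<forall>z. cmod z = r \<longrightarrow> poly (charpoly M) z \<noteq> 0) \<and>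
            size (Lin r (charpoly M)) = size (Lin r \<chi>V)" if "M \<in> W" for M
    using count_inside[OF chnz[of V] r0, of "charpoly M"] bound[OF that] by (auto simp: \<chi>V_def)
  have sizeV: "size (Lin r \<chi>V) = n0"
  proof -
    have "Lin r \<chi>V = filter_mset (\<lambda>a. a = 0) (proots \<chi>V)"
      unfolding Lin_def
    proof (rule filter_mset_cong[OF refl])
      fix a assume "a \<in># proots \<chi>V"
      then have "poly \<chi>V a = 0" using chnz[of V] by (simp add: \<chi>V_def)
      then show "cmod a < r \<longleftrightarrow> a = 0" using rZ[of a] r0 by (cases "a = 0") auto
    qed
    then show ?thesis using assms(3) chnz[of V] by (simp add: filter_eq_replicate_mset \<chi>V_def)
  qed
  define c where "c = 1 / (2 * pi * \<i>)"
  define s0 where "s0 j M = (-1) ^ j * F (\<lambda>k. c * psum r k M) j" for j and M :: "'n mat"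
  have pwM: "(\<lambda>k. c * psum r k M) = pw (Lin r (charpoly M))" if "M \<in> W" for M
  proof
    fix k
    have "psum r k M = 2 * pi * \<i> * (\<Sum>a\<in>#Lin r (charpoly M). a ^ k)"
      unfolding psum_def using WM[OF that] r0 by (intro psum_formula) auto
    then show "c * psum r k M = pw (Lin r (charpoly M)) k"
      by (simp add: c_def pw_def)
  qed
  define T where "T = {x :: nat \<Rightarrow> complex. \<forall>j\<in>{1..n}. cmod (x j - sigma V j) < \<delta>}"
  define U where "U = Gn TYPE('n) \<inter> T"
  have openT: "open T"
  proof -
    have "T = (\<Inter>j\<in>{1..n}. {x :: nat \<Rightarrow> complex. cmod (x j - sigma V j) < \<delta>})"
      by (auto simp: T_def)
    moreover have "open {x :: nat \<Rightarrow> complex. cmod (x j - sigma V j) < \<delta>}" for j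
      by (rule open_Collect_less)
        (intro continuous_on_norm continuous_on_diff continuous_on_product_coordinates continuous_on_const)+
    ultimately show ?thesis by auto
  qed
  have inW: "M \<in> W" if "M \<in> (sigma :: 'n mat \<Rightarrow> _) -` U" for M
  proof -
    have sT: "\<forall>j\<in>{1..n}. cmod (sigma M j - sigma V j) < \<delta>" using that by (simp add: U_def T_def)
    show ?thesis unfolding W_def
    proof (intro CollectI allI impI)
      fix i assume i: "i < n"
      have "cmod (sigma M (n - i) - sigma V (n - i)) < \<delta>" using sT i by auto
      moreover have "sigma M (n - i) - sigma V (n - i) = (-1) ^ (n - i) * (coeff (charpoly M) i - coeff \<chi>V i)"
        using i by (auto simp: sigma_def n_def[symmetric] \<chi>V_def right_diff_distrib)
      ultimately show "cmod (coeff (charpoly M) i - coeff \<chi>V i) < \<delta>"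
        by (simp add: norm_mult norm_power)
    qed
  qed
  show ?thesis
  proof (intro exI[of _ U] exI[of _ s0] conjI ballI allI impI)
    show "openin (top_of_set (Gn TYPE('n))) U" unfolding U_def using openT by blast
    show "sigma V \<in> U" using assms(1) d0 by (auto simp: U_def T_def Gn_def)
  next
    fix j assume "j \<in> {1..n0}"
    show "holomorphic_mat_on (s0 j) ((sigma :: 'n mat \<Rightarrow> _) -` U)"
      unfolding holomorphic_mat_on_def
    proof
      fix M :: "'n mat" assume "M \<in> sigma -` U"
      then have MW: "M \<in> W" by (rule inW)
      have hp: "hol_at (\<lambda>M. c * psum r k M) M" for k
      proof (rule hol_mult[OF hol_const])
        show "hol_at (psum r k) M"
          unfolding hol_at_def using hol_psum[OF openW MW r0] WM by auto
      qed
      have "hol_at (s0 j) M"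
        unfolding s0_def by (rule hol_mult[OF hol_const hol_F[OF hp]])
      then show "\<exists>D. (s0 j has_derivative D) (at M) \<and> (\<forall>c v. D (cscale c v) = c * D v)"
        by (simp add: hol_at_def)
    qed
  next
    fix M :: "'n mat" and L
    assume M: "M \<in> sigma -` U"
      and L: "L \<subseteq># proots (charpoly M) \<and> size L = n0 \<and> (\<forall>x\<in>#L. \<forall>y\<in>#proots (charpoly M) - L. cmod x \<le> cmod y)"
    have MW: "M \<in> W" using M by (rule inW)
    have LL: "L = Lin r (charpoly M)"
      using WM[OF MW] sizeV L by (intro L_eq_Lin) auto
    have s0M: "s0 j M = (-1) ^ j * F (pw L) j" for j
      unfolding s0_def pwM[OF MW] LL ..
    show "monom 1 n0 + (\<Sum>j = 1..n0. smult ((-1) ^ j * s0 j M) (monom 1 (n0 - j))) = (\<Prod>x\<in>#L. [:- x, 1:])"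
      unfolding s0M using final_poly[of L] L by simp
  qed
qed


end
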